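(* Let $N,M\ge 0$ be integers, let $A_0,\dots,A_N$ and $B_0,\dots,B_M$ be rational numbers with $B_0\neq 0$, and consider the Diophantine equation $$\sum_{i=0}^N A_i\big(Z_i^5+{Z'_{i+1}}^5\big)=\sum_{i=0}^M B_i\big(W_i^3+{W'_{i+1}}^3\big)\qquad(\ast\ast)$$ in the unknowns $Z_i,Z'_{i+1}$ $(0\le i\le N)$, $W_i,W'_{i+1}$ $(0\le i\le M)$. Fix rational numbers $x_0,\dots,x_N$ and $y_1,\dots,y_M$, and let $C$ be the quartic curve $$v^2=\Big(\frac{\sum_{i=0}^N A_i}{3B_0}\Big)t^4+\Big(\frac{10\sum_{i=0}^N A_ix_i^2-\sum_{i=0}^M B_i}{3B_0}\Big)t^2+\frac{5\sum_{i=0}^N A_ix_i^4-3\sum_{i=1}^M B_iy_i^2}{3B_0}.$$ Then for every rational point $(t,v)$ of $C$, setting $y_0=v$, the tuple $Z_i=t+x_i$, $Z'_{i+1}=t-x_i$ $(0\le i\le N)$, $W_i=t+y_i$, $W'_{i+1}=t-y_i$ $(0\le i\le M)$ is a rational solution of $(\ast\ast)$. Moreover, if $(\ast\ast)$ has a rational solution then, multiplying all $Z$-variables by $\mu^3$ and all $W$-variables by $\mu^5$ for a suitable integer $\mu$, one obtains an integer solution; hence if $C$ has infinitely many rational points (e.g. it has a rational point and is birational to an elliptic curve of positive rank), then $(\ast\ast)$ has infinitely many integer solutions. *)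

theory Defs
  imports Complex_Main
begin

text \<open>The Diophantine equation (**): the unknowns Z_i (0 <= i <= N), Z'_(i+1) (0 <= i <= N),
  W_i (0 <= i <= M), W'_(i+1) (0 <= i <= M) are given as functions on nat; only the
  indicated indices are used.\<close>
definition sol_eq :: "(nat \<Rightarrow> rat) \<Rightarrow> (nat \<Rightarrow> rat) \<Rightarrow> nat \<Rightarrow> nat \<Rightarrow>
    (nat \<Rightarrow> rat) \<Rightarrow> (nat \<Rightarrow> rat) \<Rightarrow> (nat \<Rightarrow> rat) \<Rightarrow> (nat \<Rightarrow> rat) \<Rightarrow> bool" where
  "sol_eq A B N M Z Z' W W' \<longleftrightarrow>
     (\<Sum>i\<le>N. A i * (Z i ^ 5 + Z' (Suc i) ^ 5)) = (\<Sum>i\<le>M. B i * (W i ^ 3 + W' (Suc i) ^ 3))"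

definition curveC :: "(nat \<Rightarrow> rat) \<Rightarrow> (nat \<Rightarrow> rat) \<Rightarrow> nat \<Rightarrow> nat \<Rightarrow>
    (nat \<Rightarrow> rat) \<Rightarrow> (nat \<Rightarrow> rat) \<Rightarrow> (rat \<times> rat) set" where
  "curveC A B N M x y = {(t, v). v ^ 2 =
       ((\<Sum>i\<le>N. A i) / (3 * B 0)) * t ^ 4
     + ((10 * (\<Sum>i\<le>N. A i * x i ^ 2) - (\<Sum>i\<le>M. B i)) / (3 * B 0)) * t ^ 2
     + (5 * (\<Sum>i\<le>N. A i * x i ^ 4) - 3 * (\<Sum>i\<in>{1..M}. B i * y i ^ 2)) / (3 * B 0)}"

text \<open>Integer solutions of (**), with the unused indices normalised to 0
  so that distinct solutions correspond to distinct tuples.\<close>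
definition int_sols :: "(nat \<Rightarrow> rat) \<Rightarrow> (nat \<Rightarrow> rat) \<Rightarrow> nat \<Rightarrow> nat \<Rightarrow>
    ((nat \<Rightarrow> int) \<times> (nat \<Rightarrow> int) \<times> (nat \<Rightarrow> int) \<times> (nat \<Rightarrow> int)) set" where
  "int_sols A B N M = {(Z, Z', W, W').
      (\<forall>i>N. Z i = 0) \<and> Z' 0 = 0 \<and> (\<forall>i>Suc N. Z' i = 0) \<and>
      (\<forall>i>M. W i = 0) \<and> W' 0 = 0 \<and> (\<forall>i>Suc M. W' i = 0) \<and>
      sol_eq A B N M (\<lambda>i. of_int (Z i)) (\<lambda>i. of_int (Z' i)) (\<lambda>i. of_int (W i)) (\<lambda>i. of_int (W' i))}"

end

theory Submission imports Defs begin

lemma denom_exists: "finite S \<Longrightarrow> \<exists>d::int. d > 0 \<and> (\<forall>q\<in>S. of_int d * (q::rat) \<in> \<int>)"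
proof (induction S rule: finite_induct)
  case empty then show ?case by (intro exI[of _ 1]) auto
next
  case (insert q S)
  then obtain d where d: "d > 0" "\<forall>q\<in>S. of_int d * q \<in> \<int>" by auto
  obtain a b where ab: "quotient_of q = (a, b)" by (cases "quotient_of q")
  have bq: "b > 0" "q = of_int a / of_int b" using ab quotient_of_denom_pos quotient_of_div by auto
  have "of_int (d*b) * q' \<in> \<int>" if "q' \<in> S" for q'
  proof -
    have "of_int (d*b) * q' = of_int b * (of_int d * q')" by simp
    then show ?thesis using d that by (metis Ints_mult Ints_of_int)
  qed
  moreover have "of_int (d*b) * q = of_int (d*a)" using bq by simp
  ultimately show ?case using d bq by (intro exI[of _ "d*b"]) auto
qed

lemma scale_ints:
  assumes "(\<mu>::rat) * q \<in> \<int>" "\<mu> \<in> \<int>" shows "\<mu>^3 * q \<in> \<int>" "\<mu>^5 * q \<in> \<int>"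
proof -
  have e: "\<mu>^3 * q = \<mu>^2 * (\<mu> * q)" "\<mu>^5 * q = \<mu>^4 * (\<mu> * q)" by (simp_all add: eval_nat_numeral algebra_simps)
  show "\<mu>^3 * q \<in> \<int>" unfolding e(1) by (rule Ints_mult[OF Ints_power[OF assms(2)] assms(1)])
  show "\<mu>^5 * q \<in> \<int>" unfolding e(2) by (rule Ints_mult[OF Ints_power[OF assms(2)] assms(1)])
qed

lemma sol_scale:
  "sol_eq A B N M Z Z' W W' \<Longrightarrow> sol_eq A B N M (\<lambda>i. (m::rat) ^ 3 * Z i) (\<lambda>i. m ^ 3 * Z' i)
                              (\<lambda>i. m ^ 5 * W i) (\<lambda>i. m ^ 5 * W' i)"
proof -
  assume h: "sol_eq A B N M Z Z' W W'"
  have 1: "(\<Sum>i\<le>N. A i * ((m^3 * Z i)^5 + (m^3 * Z' (Suc i))^5)) = m^15 * (\<Sum>i\<le>N. A i * (Z i ^ 5 + Z' (Suc i) ^ 5))"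
    unfolding sum_distrib_left by (rule sum.cong[OF refl]) algebra
  have 2: "(\<Sum>i\<le>M. B i * ((m^5 * W i)^3 + (m^5 * W' (Suc i))^3)) = m^15 * (\<Sum>i\<le>M. B i * (W i ^ 3 + W' (Suc i) ^ 3))"
    unfolding sum_distrib_left by (rule sum.cong[OF refl]) algebra
  show ?thesis using h 1 2 unfolding sol_eq_def by simp
qed

lemma part1:
  assumes "B 0 \<noteq> 0" "(t, v) \<in> curveC A B N M x y"
  shows "sol_eq A B N M (\<lambda>i. t + x i) (\<lambda>j. t - x (j - 1))
                           (\<lambda>i. t + (y(0 := v)) i) (\<lambda>j. t - (y(0 := v)) (j - 1))"
proof -
  have c: "v^2 = ((\<Sum>i\<le>N. A i) / (3 * B 0)) * t ^ 4
     + ((10 * (\<Sum>i\<le>N. A i * x i ^ 2) - (\<Sum>i\<le>M. B i)) / (3 * B 0)) * t ^ 2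
     + (5 * (\<Sum>i\<le>N. A i * x i ^ 4) - 3 * (\<Sum>i\<in>{1..M}. B i * y i ^ 2)) / (3 * B 0)"
    using assms(2) unfolding curveC_def by simp
  have c2: "3 * B 0 * v^2 = (\<Sum>i\<le>N. A i) * t ^ 4
     + (10 * (\<Sum>i\<le>N. A i * x i ^ 2) - (\<Sum>i\<le>M. B i)) * t ^ 2
     + (5 * (\<Sum>i\<le>N. A i * x i ^ 4) - 3 * (\<Sum>i\<in>{1..M}. B i * y i ^ 2))"
  proof -
    have "3 * B 0 * v^2 = 3 * B 0 * (((\<Sum>i\<le>N. A i) / (3 * B 0)) * t ^ 4
     + ((10 * (\<Sum>i\<le>N. A i * x i ^ 2) - (\<Sum>i\<le>M. B i)) / (3 * B 0)) * t ^ 2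
     + (5 * (\<Sum>i\<le>N. A i * x i ^ 4) - 3 * (\<Sum>i\<in>{1..M}. B i * y i ^ 2)) / (3 * B 0))" using c by simp
    also have "\<dots> = (\<Sum>i\<le>N. A i) * t ^ 4
     + (10 * (\<Sum>i\<le>N. A i * x i ^ 2) - (\<Sum>i\<le>M. B i)) * t ^ 2
     + (5 * (\<Sum>i\<le>N. A i * x i ^ 4) - 3 * (\<Sum>i\<in>{1..M}. B i * y i ^ 2))"
      using assms(1) by (simp add: distrib_left)
    finally show ?thesis .
  qed
  have L: "(\<Sum>i\<le>N. A i * ((t + x i)^5 + (t - x (Suc i - 1))^5)) =
      2*t^5*(\<Sum>i\<le>N. A i) + 20*t^3*(\<Sum>i\<le>N. A i * x i^2) + 10*t*(\<Sum>i\<le>N. A i * x i^4)"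
    unfolding sum_distrib_left sum.distrib[symmetric] by (rule sum.cong[OF refl]) (simp, algebra)
  have R0: "(\<Sum>i\<le>M. B i * ((t + (y(0 := v)) i)^3 + (t - (y(0 := v)) (Suc i - 1))^3)) =
      (\<Sum>i\<le>M. 2*t^3*B i) + 6*t*(B 0 * v^2) + (\<Sum>i\<in>{1..M}. 6*t*(B i * y i^2))"
  proof -
    have e: "{..M} = insert 0 {1..M}" by auto
    have "(\<Sum>i\<le>M. B i * ((t + (y(0 := v)) i)^3 + (t - (y(0 := v)) (Suc i - 1))^3))
       = B 0 * ((t+v)^3 + (t-v)^3) + (\<Sum>i\<in>{1..M}. B i * ((t + y i)^3 + (t - y i)^3))"
      unfolding e by (simp add: sum.insert)
    also have "(\<Sum>i\<in>{1..M}. B i * ((t + y i)^3 + (t - y i)^3)) = (\<Sum>i\<in>{1..M}. 2*t^3*B i + 6*t*(B i * y i^2))"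
      by (rule sum.cong[OF refl]) algebra
    also have "\<dots> = (\<Sum>i\<in>{1..M}. 2*t^3*B i) + (\<Sum>i\<in>{1..M}. 6*t*(B i * y i^2))"
      by (simp add: sum.distrib)
    also have "(\<Sum>i\<le>M. 2*t^3*B i) = 2*t^3*B 0 + (\<Sum>i\<in>{1..M}. 2*t^3*B i)"
      unfolding e by (simp add: sum.insert)
    ultimately show ?thesis by algebra
  qed
  have R: "(\<Sum>i\<le>M. B i * ((t + (y(0 := v)) i)^3 + (t - (y(0 := v)) (Suc i - 1))^3)) =
      2*t^3*(\<Sum>i\<le>M. B i) + 6*t*(B 0 * v^2) + 6*t*(\<Sum>i\<in>{1..M}. B i * y i^2)"
    unfolding R0 by (simp add: sum_distrib_left)
  show ?thesis unfolding sol_eq_def L R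
    using arg_cong[OF c2, of "\<lambda>z. 2*t*z"]
    by (simp add: sum_distrib_left[symmetric] algebra_simps power_numeral_reduce)
qed


lemma scale_exists:
  assumes "sol_eq A B N M Z Z' W W'"
  shows "\<exists>\<mu>::int. \<mu> > 0 \<and>
               (\<forall>i\<le>N. of_int \<mu> ^ 3 * Z i \<in> \<int>) \<and> (\<forall>i\<in>{1..Suc N}. of_int \<mu> ^ 3 * Z' i \<in> \<int>) \<and>
               (\<forall>i\<le>M. of_int \<mu> ^ 5 * W i \<in> \<int>) \<and> (\<forall>i\<in>{1..Suc M}. of_int \<mu> ^ 5 * W' i \<in> \<int>) \<and>
               sol_eq A B N M (\<lambda>i. of_int \<mu> ^ 3 * Z i) (\<lambda>i. of_int \<mu> ^ 3 * Z' i)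
                              (\<lambda>i. of_int \<mu> ^ 5 * W i) (\<lambda>i. of_int \<mu> ^ 5 * W' i)"
proof -
  obtain d where d: "d > 0" "\<forall>q\<in>Z`{..N} \<union> Z'`{1..Suc N} \<union> W`{..M} \<union> W'`{1..Suc M}. of_int d * q \<in> \<int>"
    using denom_exists[of "Z`{..N} \<union> Z'`{1..Suc N} \<union> W`{..M} \<union> W'`{1..Suc M}"] by auto
  have di: "(of_int d :: rat) \<in> \<int>" by simp
  show ?thesis
    apply (rule exI[of _ d])
    using d scale_ints[OF _ di] sol_scale[OF assms] by auto
qed

lemma sol_eq_cong:
  assumes "\<And>i. i \<le> N \<Longrightarrow> Z i = Zp i" "\<And>i. i \<le> N \<Longrightarrow> Z' (Suc i) = Zq (Suc i)"
    "\<And>i. i \<le> M \<Longrightarrow> W i = Wp i" "\<And>i. i \<le> M \<Longrightarrow> W' (Suc i) = Wq (Suc i)"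
  shows "sol_eq A B N M Z Z' W W' = sol_eq A B N M Zp Zq Wp Wq"
  unfolding sol_eq_def using assms by (intro arg_cong2[where f="(=)"] sum.cong) auto

lemma of_int_floor_Ints: "(q::rat) \<in> \<int> \<Longrightarrow> of_int \<lfloor>q\<rfloor> = q"
  by (metis Ints_cases floor_of_int)

lemma pos_pow_eq: "(a::rat) > 0 \<Longrightarrow> b > 0 \<Longrightarrow> n > 0 \<Longrightarrow> a^n = b^n \<Longrightarrow> a = b"
  by (simp add: power_eq_iff_eq_base)

theorem mainTheorem2:
  fixes N M :: nat and A B x y :: "nat \<Rightarrow> rat"
  assumes "B 0 \<noteq> 0"
  shows "(\<forall>t v. (t, v) \<in> curveC A B N M x y \<longrightarrow>
            sol_eq A B N M (\<lambda>i. t + x i) (\<lambda>j. t - x (j - 1))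
                           (\<lambda>i. t + (y(0 := v)) i) (\<lambda>j. t - (y(0 := v)) (j - 1)))
       \<and> (\<forall>Z Z' W W'. sol_eq A B N M Z Z' W W' \<longrightarrow>
            (\<exists>\<mu>::int. \<mu> \<noteq> 0 \<and>
               (\<forall>i\<le>N. of_int \<mu> ^ 3 * Z i \<in> \<int>) \<and> (\<forall>i\<in>{1..Suc N}. of_int \<mu> ^ 3 * Z' i \<in> \<int>) \<and>
               (\<forall>i\<le>M. of_int \<mu> ^ 5 * W i \<in> \<int>) \<and> (\<forall>i\<in>{1..Suc M}. of_int \<mu> ^ 5 * W' i \<in> \<int>) \<and>
               sol_eq A B N M (\<lambda>i. of_int \<mu> ^ 3 * Z i) (\<lambda>i. of_int \<mu> ^ 3 * Z' i)
                              (\<lambda>i. of_int \<mu> ^ 5 * W i) (\<lambda>i. of_int \<mu> ^ 5 * W' i)))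
       \<and> (infinite (curveC A B N M x y) \<longrightarrow> infinite (int_sols A B N M))"
proof (intro conjI allI impI)
  fix t v assume "(t, v) \<in> curveC A B N M x y"
  then show "sol_eq A B N M (\<lambda>i. t + x i) (\<lambda>j. t - x (j - 1))
                           (\<lambda>i. t + (y(0 := v)) i) (\<lambda>j. t - (y(0 := v)) (j - 1))"
    using part1[where B=B, OF assms] by blast
next
  fix Z Z' W W' assume "sol_eq A B N M Z Z' W W'"
  from scale_exists[OF this] show "\<exists>\<mu>::int. \<mu> \<noteq> 0 \<and>
               (\<forall>i\<le>N. of_int \<mu> ^ 3 * Z i \<in> \<int>) \<and> (\<forall>i\<in>{1..Suc N}. of_int \<mu> ^ 3 * Z' i \<in> \<int>) \<and>
               (\<forall>i\<le>M. of_int \<mu> ^ 5 * W i \<in> \<int>) \<and> (\<forall>i\<in>{1..Suc M}. of_int \<mu> ^ 5 * W' i \<in> \<int>) \<and>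
               sol_eq A B N M (\<lambda>i. of_int \<mu> ^ 3 * Z i) (\<lambda>i. of_int \<mu> ^ 3 * Z' i)
                              (\<lambda>i. of_int \<mu> ^ 5 * W i) (\<lambda>i. of_int \<mu> ^ 5 * W' i)"
    by (metis less_irrefl)
next
  assume inf: "infinite (curveC A B N M x y)"
  define C where "C = curveC A B N M x y"
  define Zr where "Zr = (\<lambda>p::rat\<times>rat. \<lambda>i. fst p + x i)"
  define Z'r where "Z'r = (\<lambda>p::rat\<times>rat. \<lambda>j. fst p - x (j - 1))"
  define Wr where "Wr = (\<lambda>p::rat\<times>rat. \<lambda>i. fst p + (y(0 := snd p)) i)"
  define W'r where "W'r = (\<lambda>p::rat\<times>rat. \<lambda>j. fst p - (y(0 := snd p)) (j - 1))"
  define P where "P = (\<lambda>p \<mu>. (\<mu>::int) > 0 \<and>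
               (\<forall>i\<le>N. of_int \<mu> ^ 3 * Zr p i \<in> \<int>) \<and> (\<forall>i\<in>{1..Suc N}. of_int \<mu> ^ 3 * Z'r p i \<in> \<int>) \<and>
               (\<forall>i\<le>M. of_int \<mu> ^ 5 * Wr p i \<in> \<int>) \<and> (\<forall>i\<in>{1..Suc M}. of_int \<mu> ^ 5 * W'r p i \<in> \<int>) \<and>
               sol_eq A B N M (\<lambda>i. of_int \<mu> ^ 3 * Zr p i) (\<lambda>i. of_int \<mu> ^ 3 * Z'r p i)
                              (\<lambda>i. of_int \<mu> ^ 5 * Wr p i) (\<lambda>i. of_int \<mu> ^ 5 * W'r p i))"
  define mu where "mu = (\<lambda>p. SOME \<mu>. P p \<mu>)"
  have Pmu: "P p (mu p)" if "p \<in> C" for p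
  proof -
    obtain t v where p: "p = (t, v)" by (cases p)
    have "sol_eq A B N M (Zr p) (Z'r p) (Wr p) (W'r p)"
      using part1[where B=B and A=A and N=N and M=M and x=x and y=y and t=t and v=v, OF assms] that unfolding p C_def Zr_def Z'r_def Wr_def W'r_def by simp
    from scale_exists[OF this] have "\<exists>\<mu>. P p \<mu>" unfolding P_def .
    then show ?thesis unfolding mu_def by (rule someI_ex)
  qed
  define F where "F = (\<lambda>p. ((\<lambda>i. if i \<le> N then \<lfloor>of_int (mu p) ^ 3 * Zr p i\<rfloor> else 0),
      (\<lambda>i. if i \<in> {1..Suc N} then \<lfloor>of_int (mu p) ^ 3 * Z'r p i\<rfloor> else 0),
      (\<lambda>i. if i \<le> M then \<lfloor>of_int (mu p) ^ 5 * Wr p i\<rfloor> else 0),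
      (\<lambda>i. if i \<in> {1..Suc M} then \<lfloor>of_int (mu p) ^ 5 * W'r p i\<rfloor> else 0)))"
  have sub: "F ` C \<subseteq> int_sols A B N M"
  proof
    fix s assume "s \<in> F ` C"
    then obtain p where p: "p \<in> C" "s = F p" by auto
    note P = Pmu[OF p(1), unfolded P_def]
    have "sol_eq A B N M (\<lambda>i. of_int (fst s i)) (\<lambda>i. of_int (fst (snd s) i))
            (\<lambda>i. of_int (fst (snd (snd s)) i)) (\<lambda>i. of_int (snd (snd (snd s)) i))"
      apply (subst sol_eq_cong[where Zp="\<lambda>i. of_int (mu p) ^ 3 * Zr p i" and Zq="\<lambda>i. of_int (mu p) ^ 3 * Z'r p i"
            and Wp="\<lambda>i. of_int (mu p) ^ 5 * Wr p i" and Wq="\<lambda>i. of_int (mu p) ^ 5 * W'r p i"])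
      using P by (auto simp: p(2) F_def of_int_floor_Ints)
    then show "s \<in> int_sols A B N M" unfolding int_sols_def p(2) by (auto simp: F_def)
  qed
  have inj: "inj_on F C"
  proof
    fix p q assume pq: "p \<in> C" "q \<in> C" "F p = F q"
    obtain t v where pp: "p = (t, v)" by (cases p)
    obtain t' v' where qq: "q = (t', v')" by (cases q)
    note P1 = Pmu[OF pq(1), unfolded P_def] and P2 = Pmu[OF pq(2), unfolded P_def]
    define a where "a = (of_int (mu p) :: rat)"
    define b where "b = (of_int (mu q) :: rat)"
    have a0: "a > 0" "b > 0" using P1 P2 unfolding a_def b_def by auto
    have c: "fst (F p) 0 = fst (F q) 0" "fst (snd (F p)) 1 = fst (snd (F q)) 1"
       "fst (snd (snd (F p))) 0 = fst (snd (snd (F q))) 0" "snd (snd (snd (F p))) 1 = snd (snd (snd (F q))) 1"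
      using pq(3) by simp_all
    have e1: "\<lfloor>a^3 * Zr p 0\<rfloor> = \<lfloor>b^3 * Zr q 0\<rfloor>" using c(1) unfolding F_def a_def b_def by simp
    have e2: "\<lfloor>a^3 * Z'r p 1\<rfloor> = \<lfloor>b^3 * Z'r q 1\<rfloor>" using c(2) unfolding F_def a_def b_def by simp
    have e3: "\<lfloor>a^5 * Wr p 0\<rfloor> = \<lfloor>b^5 * Wr q 0\<rfloor>" using c(3) unfolding F_def a_def b_def by simp
    have e4: "\<lfloor>a^5 * W'r p 1\<rfloor> = \<lfloor>b^5 * W'r q 1\<rfloor>" using c(4) unfolding F_def a_def b_def by simp
    have i1: "a^3 * Zr p 0 \<in> \<int>" "b^3 * Zr q 0 \<in> \<int>" using P1 P2 unfolding a_def b_def by simp_all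
    have i2: "a^3 * Z'r p 1 \<in> \<int>" "b^3 * Z'r q 1 \<in> \<int>" using P1 P2 unfolding a_def b_def by simp_all
    have i3: "a^5 * Wr p 0 \<in> \<int>" "b^5 * Wr q 0 \<in> \<int>" using P1 P2 unfolding a_def b_def by simp_all
    have i4: "a^5 * W'r p 1 \<in> \<int>" "b^5 * W'r q 1 \<in> \<int>" using P1 P2 unfolding a_def b_def by simp_all
    have "a^3 * Zr p 0 = b^3 * Zr q 0" using e1 i1 by (metis of_int_floor_Ints)
    then have h1: "a^3 * (t + x 0) = b^3 * (t' + x 0)" by (simp add: Zr_def pp qq)
    have "a^3 * Z'r p 1 = b^3 * Z'r q 1" using e2 i2 by (metis of_int_floor_Ints)
    then have h2: "a^3 * (t - x 0) = b^3 * (t' - x 0)" by (simp add: Z'r_def pp qq)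
    have "a^5 * Wr p 0 = b^5 * Wr q 0" using e3 i3 by (metis of_int_floor_Ints)
    then have h3: "a^5 * (t + v) = b^5 * (t' + v')" by (simp add: Wr_def pp qq)
    have "a^5 * W'r p 1 = b^5 * W'r q 1" using e4 i4 by (metis of_int_floor_Ints)
    then have h4: "a^5 * (t - v) = b^5 * (t' - v')" by (simp add: W'r_def pp qq)
    have T3: "a^3 * t = b^3 * t'" using h1 h2 by algebra
    have T5: "a^5 * t = b^5 * t'" using h3 h4 by algebra
    have V: "a^5 * v = b^5 * v'" using h3 h4 by algebra
    show "p = q"
    proof (cases "t = 0")
      case True
      then have t': "t' = 0" using T3 a0 by simp
      have vv: "v^2 = v'^2" using pq(1,2) unfolding C_def curveC_def pp qq True t' by simp
      show ?thesis
      proof (cases "v = 0")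
        case True then show ?thesis using vv pp qq \<open>t = 0\<close> t' by simp
      next
        case False
        have "(a^5*v)^2 = (b^5*v')^2" using V by simp
        then have "a^10 * v^2 = b^10 * v^2" using vv by (simp add: power_mult_distrib flip: power_mult)
        then have "a^10 = b^10" using False by simp
        then have "a = b" using pos_pow_eq[OF a0, of 10] pos_pow_eq[OF a0, of 2] by simp
        then show ?thesis using V a0 pp qq \<open>t = 0\<close> t' by simp
      qed
    next
      case False
      have "a^2 * (a^3 * t) = b^2 * (b^3 * t')" using T5 by (simp add: eval_nat_numeral algebra_simps)
      then have "a^2 * (a^3 * t) = b^2 * (a^3 * t)" using T3 by simp
      moreover have nz: "a^3 * t \<noteq> 0" using False a0 by simp
      ultimately have "a^2 = b^2" using mult_right_cancel[OF nz] by blast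
      then have "a = b" using pos_pow_eq[OF a0, of 10] pos_pow_eq[OF a0, of 2] by simp
      then show ?thesis using T3 V a0 pp qq by simp
    qed
  qed
  show "infinite (int_sols A B N M)"
  proof
    assume "finite (int_sols A B N M)"
    then have "finite (F ` C)" using sub finite_subset by blast
    then have "finite C" using inj finite_imageD by blast
    then show False using inf C_def by simp
  qed
qed

end
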